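(* Let $G=(V,E)$ be a finite undirected graph and run the neighborhood-expansion (NE) edge-partitioning algorithm described in the context to build partitions $p_1,\dots,p_k$ of $E$. Suppose that during the construction of partition $p_i$ a vertex $v$ is added to the secondary set $S_i$. Then the adjacency list of $v$ (the list $N(v)$ of its neighbors) is accessed again during the construction of some subsequent partition $p_j$, $j>i$, only if $v$ is still in $S_i$ and not in the core set $C$ when the construction of $p_i$ has been completed, i.e., only if $v$ was not moved to $C$ during the construction of $p_i$.
   Context: Edge partitioning: given an undirected graph $G=(V,E)$ and an integer $k>1$, the edge set is divided into disjoint sets (partitions) $p_1,\dots,p_k$ whose union is $E$. For a vertex $v$, $N(v)$ denotes its set of neighbors in the current graph and $d(v)$ its degree. The NE algorithm maintains a global vertex set $C$ (the core set, initially empty) and, for each partition $p_i$, a vertex set $S_i$ (the secondary set of $p_i$, initially empty); vertices are only ever added to these sets, never removed. Each vertex $u\in S_i$ carries a number $d_{ext}(u,S_i)$ (its external degree). Partitions are built in sequence $i=1,\dots,k$. While building $p_i$, as long as $|p_i|<|E|/k$: if $S_i\setminus C\neq\emptyset$, choose $v_{min}\in S_i\setminus C$ minimizing $d_{ext}(v,S_i)$ and call MoveToCore$(v_{min})$; otherwise (Initialize) choose any vertex $v\notin C$ and call MoveToCore$(v)$. MoveToCore$(v)$: add $v$ to $C$; then for each $u\in N(v)\setminus(C\cup S_i)$ call MoveToSecondary$(u)$. MoveToSecondary$(v)$: add $v$ to $S_i$; set $d_{ext}(v,S_i)\gets d(v)$; then for each $u\in N(v)\cap(C\cup S_i)$: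 decrement $d_{ext}(u,S_i)$ and $d_{ext}(v,S_i)$ by one; if $|p_i|<|E|/k$, assign edge $(u,v)$ to $p_i$, otherwise assign it to $p_{i+1}$ and add $u$ and $v$ to $S_{i+1}$ ("spill-over"); in both cases remove the edge $(u,v)$ from the graph. The adjacency list of a vertex $v$ is said to be accessed when the algorithm iterates over $N(v)$, which happens exactly within MoveToCore$(v)$ and MoveToSecondary$(v)$. *)

theory Defs
  imports Main "HOL.Real"
begin

text \<open>Undirected edges are 2-element sets.\<close>

datatype 'a event =
    Access nat 'a            \<comment> \<open>during construction of p_i, adjacency list of v accessed\<close>
  | SecAdd nat nat 'a        \<comment> \<open>during construction of p_i, v added to S_l\<close>
  | CoreAdd nat 'a           \<comment> \<open>during construction of p_i, v added to C\<close>
  | PartDone nat "'a set" "'a set"  \<comment> \<open>construction of p_i completed; snapshot of C and S_i\<close>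

record 'a nestate =
  rem  :: "'a set set"
  core :: "'a set"
  sec  :: "nat \<Rightarrow> 'a set"
  dext :: "nat \<Rightarrow> 'a \<Rightarrow> int"
  part :: "nat \<Rightarrow> 'a set set"
  cur  :: nat
  log  :: "'a event list"

definition nbrs :: "('a, 'b) nestate_scheme \<Rightarrow> 'a \<Rightarrow> 'a set" where
  "nbrs st v = {u. {u, v} \<in> rem st}"

definition below :: "'a set set \<Rightarrow> nat \<Rightarrow> 'a nestate \<Rightarrow> bool" where
  "below E k st \<longleftrightarrow> real (card (part st (cur st))) < real (card E) / real k"

text \<open>One iteration of the loop in MoveToSecondary(v), for neighbour u.\<close>
definition sec_edge :: "'a set set \<Rightarrow> nat \<Rightarrow> 'a \<Rightarrow> 'a nestate \<Rightarrow> 'a \<Rightarrow> 'a nestate" where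
  "sec_edge E k v st u =
    (let i = cur st; d = dext st i; d' = d(u := d u - 1); d'' = d'(v := d' v - 1);
         st1 = st\<lparr>dext := (dext st)(i := d''), rem := rem st - {{u, v}}\<rparr>
     in if below E k st
        then st1\<lparr>part := (part st)(i := insert {u, v} (part st i))\<rparr>
        else st1\<lparr>part := (part st)(Suc i := insert {u, v} (part st (Suc i))),
                 sec := (sec st)(Suc i := sec st (Suc i) \<union> {u, v}),
                 log := log st @ [SecAdd i (Suc i) u, SecAdd i (Suc i) v]\<rparr>)"

text \<open>MoveToSecondary(v): the neighbours in C \<union> S_i may be processed in any order.\<close>
definition move_sec :: "'a set set \<Rightarrow> nat \<Rightarrow> 'a nestate \<Rightarrow> 'a \<Rightarrow> 'a nestate \<Rightarrow> bool" where
  "move_sec E k st v st' \<longleftrightarrow>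
    (let i = cur st;
         st0 = st\<lparr>sec := (sec st)(i := insert v (sec st i)),
                  dext := (dext st)(i := (dext st i)(v := int (card (nbrs st v)))),
                  log := log st @ [SecAdd i i v, Access i v]\<rparr>
     in \<exists>us. distinct us \<and> set us = nbrs st0 v \<inter> (core st0 \<union> sec st0 i) \<and>
             st' = fold (\<lambda>u s. sec_edge E k v s u) us st0)"

inductive sec_seq :: "'a set set \<Rightarrow> nat \<Rightarrow> 'a nestate \<Rightarrow> 'a list \<Rightarrow> 'a nestate \<Rightarrow> bool"
  for E k where
  sec_seq_Nil: "sec_seq E k st [] st"
| sec_seq_Cons: "move_sec E k st u st1 \<Longrightarrow> sec_seq E k st1 us st2 \<Longrightarrow> sec_seq E k st (u # us) st2"

text \<open>MoveToCore(v): the neighbours outside C \<union> S_i may be processed in any order.\<close>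
definition move_core :: "'a set set \<Rightarrow> nat \<Rightarrow> 'a nestate \<Rightarrow> 'a \<Rightarrow> 'a nestate \<Rightarrow> bool" where
  "move_core E k st v st' \<longleftrightarrow>
    (let i = cur st;
         st0 = st\<lparr>core := insert v (core st), log := log st @ [CoreAdd i v, Access i v]\<rparr>
     in \<exists>us. distinct us \<and> set us = nbrs st0 v - (core st0 \<union> sec st0 i) \<and>
             sec_seq E k st0 us st')"

inductive ne_step :: "'a set \<Rightarrow> 'a set set \<Rightarrow> nat \<Rightarrow> 'a nestate \<Rightarrow> 'a nestate \<Rightarrow> bool"
  for V E k where
  expand: "cur st \<le> k \<Longrightarrow> below E k st \<Longrightarrow> v \<in> sec st (cur st) - core st \<Longrightarrow>
           (\<forall>w \<in> sec st (cur st) - core st. dext st (cur st) v \<le> dext st (cur st) w) \<Longrightarrow>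
           move_core E k st v st' \<Longrightarrow> ne_step V E k st st'"
| initialize: "cur st \<le> k \<Longrightarrow> below E k st \<Longrightarrow> sec st (cur st) - core st = {} \<Longrightarrow>
           v \<in> V - core st \<Longrightarrow> move_core E k st v st' \<Longrightarrow> ne_step V E k st st'"
| next_part: "cur st < k \<Longrightarrow> \<not> below E k st \<Longrightarrow>
           st' = st\<lparr>cur := Suc (cur st),
                    log := log st @ [PartDone (cur st) (core st) (sec st (cur st))]\<rparr> \<Longrightarrow>
           ne_step V E k st st'"

definition ne_init :: "'a set set \<Rightarrow> 'a nestate" where
  "ne_init E = \<lparr>rem = E, core = {}, sec = (\<lambda>_. {}), dext = (\<lambda>_ _. 0),
                part = (\<lambda>_. {}), cur = 1, log = []\<rparr>"

definition ne_reachable :: "'a set \<Rightarrow> 'a set set \<Rightarrow> nat \<Rightarrow> 'a nestate \<Rightarrow> bool" where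
  "ne_reachable V E k st \<longleftrightarrow> (ne_step V E k)\<^sup>*\<^sup>* (ne_init E) st"

end

theory Submission
  imports Defs
begin

definition ext_ok :: "nat \<Rightarrow> 'a set \<Rightarrow> 'a nestate \<Rightarrow> 'a nestate \<Rightarrow> bool" where
  "ext_ok c A st st' \<longleftrightarrow> cur st' = c \<and> cur st = c \<and> core st' = core st \<and>
     (\<forall>l. sec st l \<subseteq> sec st' l) \<and>
     (\<exists>ext. log st' = log st @ ext \<and>
        (\<forall>e\<in>set ext. (\<exists>u. e = SecAdd c (Suc c) u) \<or>
            (\<exists>u\<in>A. e = Access c u \<or> (e = SecAdd c c u \<and> u \<in> sec st' c))))"

lemma ext_ok_refl: "cur st = c \<Longrightarrow> ext_ok c A st st"
  unfolding ext_ok_def by auto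

lemma ext_ok_trans:
  assumes "ext_ok c A st1 st2" "ext_ok c B st2 st3"
  shows "ext_ok c (A \<union> B) st1 st3"
proof -
  from assms(1) obtain ext1 where e1: "log st2 = log st1 @ ext1"
    "\<forall>e\<in>set ext1. (\<exists>u. e = SecAdd c (Suc c) u) \<or>
            (\<exists>u\<in>A. e = Access c u \<or> (e = SecAdd c c u \<and> u \<in> sec st2 c))"
    unfolding ext_ok_def by blast
  from assms(2) obtain ext2 where e2: "log st3 = log st2 @ ext2"
    "\<forall>e\<in>set ext2. (\<exists>u. e = SecAdd c (Suc c) u) \<or>
            (\<exists>u\<in>B. e = Access c u \<or> (e = SecAdd c c u \<and> u \<in> sec st3 c))"
    unfolding ext_ok_def by blast
  have s: "sec st2 c \<subseteq> sec st3 c" using assms(2) unfolding ext_ok_def by blast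
  have "log st3 = log st1 @ (ext1 @ ext2)" using e1 e2 by simp
  moreover have "\<forall>e\<in>set (ext1 @ ext2). (\<exists>u. e = SecAdd c (Suc c) u) \<or>
            (\<exists>u\<in>A \<union> B. e = Access c u \<or> (e = SecAdd c c u \<and> u \<in> sec st3 c))"
    using e1(2) e2(2) s by fastforce
  moreover have "cur st3 = c" "cur st1 = c" "core st3 = core st1"
    using assms unfolding ext_ok_def by simp_all
  moreover have "\<forall>l. sec st1 l \<subseteq> sec st3 l"
    using assms unfolding ext_ok_def by (meson order_trans)
  ultimately show ?thesis unfolding ext_ok_def by blast
qed

lemma ext_ok_mono: "ext_ok c A st st' \<Longrightarrow> A \<subseteq> B \<Longrightarrow> ext_ok c B st st'"
  unfolding ext_ok_def by blast

lemma sec_edge_ok: "cur st = c \<Longrightarrow> ext_ok c {} st (sec_edge E k v st u)"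
  unfolding ext_ok_def sec_edge_def Let_def by auto

lemma fold_ok: "cur st = c \<Longrightarrow> ext_ok c {} st (fold (\<lambda>u s. sec_edge E k v s u) us st)"
proof (induction us arbitrary: st)
  case Nil then show ?case by (simp add: ext_ok_refl)
next
  case (Cons a us)
  have 1: "ext_ok c {} st (sec_edge E k v st a)" using Cons.prems by (rule sec_edge_ok)
  hence "cur (sec_edge E k v st a) = c" unfolding ext_ok_def by simp
  hence 2: "ext_ok c {} (sec_edge E k v st a) (fold (\<lambda>u s. sec_edge E k v s u) us (sec_edge E k v st a))"
    by (rule Cons.IH)
  show ?case using ext_ok_trans[OF 1 2] by simp
qed

lemma move_sec_ok: "move_sec E k st v st' \<Longrightarrow> cur st = c \<Longrightarrow> ext_ok c {v} st st'"
proof -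
  assume m: "move_sec E k st v st'" and c: "cur st = c"
  define st0 where "st0 = st\<lparr>sec := (sec st)(c := insert v (sec st c)),
                  dext := (dext st)(c := (dext st c)(v := int (card (nbrs st v)))),
                  log := log st @ [SecAdd c c v, Access c v]\<rparr>"
  from m obtain us where us: "st' = fold (\<lambda>u s. sec_edge E k v s u) us st0"
    unfolding move_sec_def Let_def st0_def c by blast
  have 1: "ext_ok c {v} st st0" unfolding ext_ok_def st0_def using c by auto
  have 2: "ext_ok c {} st0 st'" unfolding us by (rule fold_ok) (simp add: st0_def c)
  show ?thesis using ext_ok_trans[OF 1 2] by simp
qed

lemma sec_seq_ok: "sec_seq E k st us st' \<Longrightarrow> cur st = c \<Longrightarrow> ext_ok c (set us) st st'"
proof (induction rule: sec_seq.induct)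
  case (sec_seq_Nil st) then show ?case by (simp add: ext_ok_refl)
next
  case (sec_seq_Cons st u st1 us st2)
  have 1: "ext_ok c {u} st st1" using sec_seq_Cons by (simp add: move_sec_ok)
  hence "cur st1 = c" unfolding ext_ok_def by simp
  hence 2: "ext_ok c (set us) st1 st2" by (rule sec_seq_Cons.IH)
  show ?case using ext_ok_trans[OF 1 2] by simp
qed

definition Inv :: "'a nestate \<Rightarrow> bool" where
  "Inv st \<longleftrightarrow> 1 \<le> cur st \<and>
    (\<forall>j x. Access j x \<in> set (log st) \<longrightarrow> j \<le> cur st) \<and>
    (\<forall>i x. SecAdd i i x \<in> set (log st) \<longrightarrow> 1 \<le> i \<and> i \<le> cur st \<and> x \<in> sec st i) \<and>
    (\<forall>i Cs Ss. PartDone i Cs Ss \<in> set (log st) \<longrightarrow> i < cur st \<and> Cs \<subseteq> core st) \<and>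
    (\<forall>i. 1 \<le> i \<longrightarrow> i < cur st \<longrightarrow> (\<exists>Cs Ss. PartDone i Cs Ss \<in> set (log st))) \<and>
    (\<forall>i Cs Ss x. PartDone i Cs Ss \<in> set (log st) \<longrightarrow> SecAdd i i x \<in> set (log st) \<longrightarrow> x \<in> Ss) \<and>
    (\<forall>i j Cs Ss x. PartDone i Cs Ss \<in> set (log st) \<longrightarrow> Access j x \<in> set (log st) \<longrightarrow> i < j \<longrightarrow> x \<notin> Cs)"

lemma Inv_init: "Inv (ne_init E)"
  unfolding Inv_def ne_init_def by auto

lemma Inv_core:
  assumes inv: "Inv st" and vc: "v \<notin> core st" and mc: "move_core E k st v st'"
  shows "Inv st'"
proof -
  define c where "c = cur st"
  define st0 where "st0 = st\<lparr>core := insert v (core st), log := log st @ [CoreAdd c v, Access c v]\<rparr>"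
  from mc obtain us where us: "set us = nbrs st0 v - (core st0 \<union> sec st0 c)" "sec_seq E k st0 us st'"
    unfolding move_core_def Let_def st0_def c_def by blast
  have eo: "ext_ok c (set us) st0 st'" using us(2) by (rule sec_seq_ok) (simp add: st0_def c_def)
  have dis: "\<forall>x\<in>insert v (set us). x \<notin> core st" using us(1) vc by (auto simp: st0_def)
  from eo obtain ext where ext: "log st' = log st @ [CoreAdd c v, Access c v] @ ext"
    "\<forall>e\<in>set ext. (\<exists>u. e = SecAdd c (Suc c) u) \<or>
            (\<exists>u\<in>set us. e = Access c u \<or> (e = SecAdd c c u \<and> u \<in> sec st' c))"
    unfolding ext_ok_def st0_def by auto
  have cur': "cur st' = c" and core': "core st' = insert v (core st)"
    and sec': "\<And>l. sec st l \<subseteq> sec st' l"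
    using eo unfolding ext_ok_def st0_def by auto
  have c1: "1 \<le> c" using inv unfolding Inv_def c_def by simp
  have accN: "\<And>j x. Access j x \<in> set (log st') \<Longrightarrow> Access j x \<in> set (log st) \<or> (j = c \<and> x \<notin> core st)"
    using ext dis by fastforce
  have secN: "\<And>i x. SecAdd i i x \<in> set (log st') \<Longrightarrow> SecAdd i i x \<in> set (log st) \<or> (i = c \<and> x \<in> sec st' c)"
    using ext by fastforce
  have pdN: "\<And>i Cs Ss. PartDone i Cs Ss \<in> set (log st') \<longleftrightarrow> PartDone i Cs Ss \<in> set (log st)"
    using ext by fastforce
  have I2: "\<And>j x. Access j x \<in> set (log st) \<Longrightarrow> j \<le> c"
    and I3: "\<And>i x. SecAdd i i x \<in> set (log st) \<Longrightarrow> 1 \<le> i \<and> i \<le> c \<and> x \<in> sec st i"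
    and I4: "\<And>i Cs Ss. PartDone i Cs Ss \<in> set (log st) \<Longrightarrow> i < c \<and> Cs \<subseteq> core st"
    and I5: "\<And>i. 1 \<le> i \<Longrightarrow> i < c \<Longrightarrow> (\<exists>Cs Ss. PartDone i Cs Ss \<in> set (log st))"
    and I6: "\<And>i Cs Ss x. PartDone i Cs Ss \<in> set (log st) \<Longrightarrow> SecAdd i i x \<in> set (log st) \<Longrightarrow> x \<in> Ss"
    and I7: "\<And>i j Cs Ss x. PartDone i Cs Ss \<in> set (log st) \<Longrightarrow> Access j x \<in> set (log st) \<Longrightarrow> i < j \<Longrightarrow> x \<notin> Cs"
    using inv unfolding Inv_def c_def by blast+
  show ?thesis
    unfolding Inv_def
  proof (intro conjI allI impI)
    show "1 \<le> cur st'" using c1 cur' by simp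
  next
    fix j x assume a: "Access j x \<in> set (log st')"
    show "j \<le> cur st'" using accN[OF a] I2 cur' by fastforce
  next
    fix i x assume a: "SecAdd i i x \<in> set (log st')"
    show "1 \<le> i" "i \<le> cur st'" "x \<in> sec st' i"
      using secN[OF a] I3 cur' c1 sec' by fastforce+
  next
    fix i Cs Ss assume a: "PartDone i Cs Ss \<in> set (log st')"
    show "i < cur st'" "Cs \<subseteq> core st'" using a pdN I4 cur' core' by fastforce+
  next
    fix i assume "1 \<le> i" "i < cur st'"
    then show "\<exists>Cs Ss. PartDone i Cs Ss \<in> set (log st')" using pdN I5 cur' by metis
  next
    fix i Cs Ss x assume a: "PartDone i Cs Ss \<in> set (log st')" "SecAdd i i x \<in> set (log st')"
    have p: "PartDone i Cs Ss \<in> set (log st)" using a pdN by blast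
    hence "i < c" using I4 by blast
    hence "SecAdd i i x \<in> set (log st)" using secN[OF a(2)] by blast
    then show "x \<in> Ss" using p I6 by blast
  next
    fix i j Cs Ss x assume a: "PartDone i Cs Ss \<in> set (log st')" "Access j x \<in> set (log st')" "i < j"
    have p: "PartDone i Cs Ss \<in> set (log st)" using a pdN by blast
    hence "Cs \<subseteq> core st" using I4 by blast
    then show "x \<notin> Cs" using accN[OF a(2)] p a(3) I7 by blast
  qed
qed

lemma Inv_next:
  assumes inv: "Inv st"
    and st': "st' = st\<lparr>cur := Suc (cur st), log := log st @ [PartDone (cur st) (core st) (sec st (cur st))]\<rparr>"
  shows "Inv st'"
proof -
  define c where "c = cur st"
  have I2: "\<And>j x. Access j x \<in> set (log st) \<Longrightarrow> j \<le> c"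
    and I3: "\<And>i x. SecAdd i i x \<in> set (log st) \<Longrightarrow> 1 \<le> i \<and> i \<le> c \<and> x \<in> sec st i"
    and I4: "\<And>i Cs Ss. PartDone i Cs Ss \<in> set (log st) \<Longrightarrow> i < c \<and> Cs \<subseteq> core st"
    and I5: "\<And>i. 1 \<le> i \<Longrightarrow> i < c \<Longrightarrow> (\<exists>Cs Ss. PartDone i Cs Ss \<in> set (log st))"
    and I6: "\<And>i Cs Ss x. PartDone i Cs Ss \<in> set (log st) \<Longrightarrow> SecAdd i i x \<in> set (log st) \<Longrightarrow> x \<in> Ss"
    and I7: "\<And>i j Cs Ss x. PartDone i Cs Ss \<in> set (log st) \<Longrightarrow> Access j x \<in> set (log st) \<Longrightarrow> i < j \<Longrightarrow> x \<notin> Cs"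
    and c1: "1 \<le> c"
    using inv unfolding Inv_def c_def by blast+
  have L: "set (log st') = insert (PartDone c (core st) (sec st c)) (set (log st))"
    using st' c_def by simp
  have C: "cur st' = Suc c" "core st' = core st" "sec st' = sec st" using st' c_def by simp_all
  show ?thesis
    unfolding Inv_def L C
  proof (intro conjI allI impI)
    show "1 \<le> Suc c" by simp
  next
    fix j x assume "Access j x \<in> insert (PartDone c (core st) (sec st c)) (set (log st))"
    then show "j \<le> Suc c" using I2 by fastforce
  next
    fix i x assume a: "SecAdd i i x \<in> insert (PartDone c (core st) (sec st c)) (set (log st))"
    then have a: "SecAdd i i x \<in> set (log st)" by simp
    show "1 \<le> i" "i \<le> Suc c" "x \<in> sec st i" using I3[OF a] by auto
  next
    fix i Cs Ss assume a: "PartDone i Cs Ss \<in> insert (PartDone c (core st) (sec st c)) (set (log st))"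
    show "i < Suc c" "Cs \<subseteq> core st" using a I4 by fastforce+
  next
    fix i assume "1 \<le> i" "i < Suc c"
    then show "\<exists>Cs Ss. PartDone i Cs Ss \<in> insert (PartDone c (core st) (sec st c)) (set (log st))"
      using I5 by (cases "i = c") auto
  next
    fix i Cs Ss x assume a: "PartDone i Cs Ss \<in> insert (PartDone c (core st) (sec st c)) (set (log st))"
      "SecAdd i i x \<in> insert (PartDone c (core st) (sec st c)) (set (log st))"
    then have b: "SecAdd i i x \<in> set (log st)" by simp
    show "x \<in> Ss" using a(1) I6[OF _ b] I3[OF b] by auto
  next
    fix i j Cs Ss x assume a: "PartDone i Cs Ss \<in> insert (PartDone c (core st) (sec st c)) (set (log st))"
      "Access j x \<in> insert (PartDone c (core st) (sec st c)) (set (log st))" "i < j"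
    then have b: "Access j x \<in> set (log st)" by simp
    show "x \<notin> Cs" using a(1) a(3) I7[OF _ b] I2[OF b] by auto
  qed
qed

lemma Inv_step: "ne_step V E k st st' \<Longrightarrow> Inv st \<Longrightarrow> Inv st'"
proof (induction rule: ne_step.induct)
  case (expand st v st')
  have "v \<notin> core st" using expand.hyps(3) by simp
  then show ?case using Inv_core[OF expand.prems _ expand.hyps(5)] by simp
next
  case (initialize st v st')
  have "v \<notin> core st" using initialize.hyps(4) by simp
  then show ?case using Inv_core[OF initialize.prems _ initialize.hyps(5)] by simp
next
  case (next_part st st')
  then show ?case using Inv_next[OF next_part.prems next_part.hyps(3)] by simp
qed

theorem theorem1:
  fixes V :: "'a set" and E :: "'a set set" and k i j :: nat and v :: 'a and st :: "'a nestate"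
  assumes "finite V"
    and "E \<subseteq> {{u, w} | u w. u \<in> V \<and> w \<in> V \<and> u \<noteq> w}"
    and "1 < k"
    and "ne_reachable V E k st"
    and "SecAdd i i v \<in> set (log st)"
    and "Access j v \<in> set (log st)"
    and "i < j"
  shows "\<exists>Cs Ss. PartDone i Cs Ss \<in> set (log st) \<and> v \<in> Ss \<and> v \<notin> Cs"
proof -
  have "Inv st" using assms(4) unfolding ne_reachable_def
  proof (induction rule: rtranclp_induct)
    case base then show ?case by (rule Inv_init)
  next
    case (step y z) then show ?case using Inv_step[of V E k y z] by simp
  qed
  then have I2: "j \<le> cur st" and I3: "1 \<le> i"
    and I5: "\<And>i. 1 \<le> i \<Longrightarrow> i < cur st \<Longrightarrow> (\<exists>Cs Ss. PartDone i Cs Ss \<in> set (log st))"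
    and I6: "\<And>Cs Ss. PartDone i Cs Ss \<in> set (log st) \<Longrightarrow> v \<in> Ss"
    and I7: "\<And>Cs Ss. PartDone i Cs Ss \<in> set (log st) \<Longrightarrow> v \<notin> Cs"
    using assms(5-7) unfolding Inv_def by blast+
  have "i < cur st" using I2 assms(7) by simp
  then obtain Cs Ss where "PartDone i Cs Ss \<in> set (log st)" using I5 I3 by blast
  then show ?thesis using I6 I7 by blast
qed

end
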